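(* Let $G$ be a group, $\phi\in\mathrm{Aut}(G)$, $K\subseteq G\rtimes_\phi\mathbb{Z}$ and $t^rg\in G\rtimes_\phi\mathbb{Z}$ (with $r\in\mathbb{Z}$, $g\in G$). For $m\in\mathbb{Z}$ put $K_m=\{x\in G\mid t^mx\in K\}$. (i) If $r=0$, then $g$ is conjugate in $G\rtimes_\phi\mathbb{Z}$ to an element of $K$ if and only if there exists $k\in\mathbb{Z}$ such that $\phi^k(g)$ is conjugate in $G$ to an element of $K_0$. (ii) If $r\neq 0$, then $t^rg$ is conjugate in $G\rtimes_\phi\mathbb{Z}$ to an element of $K$ if and only if there exist $j\in\{0,1,\ldots,|r|-1\}$ and $z\in G$ such that $\phi^r(z)^{-1}\,\phi^j(g)\,z\in K_r$.
   Context: $G\rtimes_\phi\mathbb{Z}$ denotes the group generated by $G$ and a letter $t$ subject to the relations of $G$ and $t^{-1}at=\phi(a)$ for $a\in G$; every element is uniquely of the form $t^ag$ with $a\in\mathbb{Z}$, $g\in G$. The paper phrases the result as an equivalence of decision problems: $GCP_{(K,t^rg)}(G\rtimes_\phi\mathbb{Z})$ (does $t^rg$ have a conjugate in $K$) is equivalent to $GBrCP_{(K_0,\phi,g)}(G)$ when $r=0$, and to the disjunction over $j$ of $GTCP_{(K_r,\phi^r,\phi^j(g))}(G)$ (does $\phi^j(g)$ have a $\phi^r$-twisted conjugate $\phi^r(z)^{-1}\phi^j(g)z$ in $K_r$) when $r\neq0$. *)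

theory Defs
  imports "HOL-Algebra.Group"
begin

definition aut_pow :: "('a, 'b) monoid_scheme \<Rightarrow> ('a \<Rightarrow> 'a) \<Rightarrow> int \<Rightarrow> 'a \<Rightarrow> 'a" where
  "aut_pow G \<phi> k = (if 0 \<le> k then \<phi> ^^ nat k else (inv_into (carrier G) \<phi>) ^^ nat (- k))"

text \<open>The semidirect product G \<rtimes>_phi Z. The element t^a g is represented by the pair (a, g).
  From t^{-1} x t = phi(x) we get (t^a g)(t^b h) = t^(a+b) phi^b(g) h.\<close>
definition sdp :: "('a, 'b) monoid_scheme \<Rightarrow> ('a \<Rightarrow> 'a) \<Rightarrow> (int \<times> 'a) monoid" where
  "sdp G \<phi> = \<lparr> carrier = UNIV \<times> carrier G,
               mult = (\<lambda>(a, x) (b, y). (a + b, aut_pow G \<phi> b x \<otimes>\<^bsub>G\<^esub> y)),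
               one = (0, \<one>\<^bsub>G\<^esub>) \<rparr>"

definition conj_into :: "('c, 'd) monoid_scheme \<Rightarrow> 'c \<Rightarrow> 'c set \<Rightarrow> bool" where
  "conj_into H x K = (\<exists>w \<in> carrier H. inv\<^bsub>H\<^esub> w \<otimes>\<^bsub>H\<^esub> x \<otimes>\<^bsub>H\<^esub> w \<in> K)"

definition slice :: "('a, 'b) monoid_scheme \<Rightarrow> (int \<times> 'a) set \<Rightarrow> int \<Rightarrow> 'a set" where
  "slice G K m = {x \<in> carrier G. (m, x) \<in> K}"

end

theory Submission imports Defs begin

locale autctx = group G for G (structure) +
  fixes \<phi> :: "'a \<Rightarrow> 'a"
  assumes phi: "\<phi> \<in> iso G G"
begin

abbreviation "\<psi> \<equiv> inv_into (carrier G) \<phi>"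
abbreviation "P \<equiv> aut_pow G \<phi>"

lemma phi_c: "x \<in> carrier G \<Longrightarrow> \<phi> x \<in> carrier G"
  using phi by (auto simp: iso_def hom_def)
lemma phi_m: "x \<in> carrier G \<Longrightarrow> y \<in> carrier G \<Longrightarrow> \<phi> (x \<otimes> y) = \<phi> x \<otimes> \<phi> y"
  using phi by (auto simp: iso_def hom_def)
lemma phi_bij: "bij_betw \<phi> (carrier G) (carrier G)"
  using phi by (auto simp: iso_def)
lemma psi_c: "x \<in> carrier G \<Longrightarrow> \<psi> x \<in> carrier G"
  using phi_bij by (metis bij_betw_def inv_into_into)
lemma phi_psi: "x \<in> carrier G \<Longrightarrow> \<phi> (\<psi> x) = x"
  using phi_bij by (metis bij_betw_def f_inv_into_f)
lemma psi_phi: "x \<in> carrier G \<Longrightarrow> \<psi> (\<phi> x) = x"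
  using phi_bij by (metis bij_betw_def inv_into_f_f)
lemma psi_m: "x \<in> carrier G \<Longrightarrow> y \<in> carrier G \<Longrightarrow> \<psi> (x \<otimes> y) = \<psi> x \<otimes> \<psi> y"
  by (metis phi_m psi_c phi_psi psi_phi m_closed)

lemma psi_pow_c: "x \<in> carrier G \<Longrightarrow> (\<psi> ^^ n) x \<in> carrier G"
  by (induction n) (auto simp: psi_c)
lemma phi_pow_c: "x \<in> carrier G \<Longrightarrow> (\<phi> ^^ n) x \<in> carrier G"
  by (induction n) (auto simp: phi_c)

lemma P_c: "x \<in> carrier G \<Longrightarrow> P k x \<in> carrier G"
  by (simp add: aut_pow_def psi_pow_c phi_pow_c)

lemma P0: "P 0 x = x" by (simp add: aut_pow_def)

lemma P_up: "x \<in> carrier G \<Longrightarrow> P (k + 1) x = \<phi> (P k x)"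
proof (cases "0 \<le> k")
  case True
  then have "nat (k+1) = Suc (nat k)" by simp
  then show ?thesis using True by (simp add: aut_pow_def)
next
  case False
  assume x: "x \<in> carrier G"
  then have "nat (-k) = Suc (nat (-(k+1)))" using False by simp
  then have "P k x = \<psi> (P (k+1) x)" using False by (simp add: aut_pow_def)
  moreover have "P (k+1) x \<in> carrier G" using x P_c by blast
  ultimately show ?thesis by (simp add: phi_psi)
qed

lemma P_down: "x \<in> carrier G \<Longrightarrow> P (k - 1) x = \<psi> (P k x)"
  using P_up[of x "k-1"] by (simp add: psi_phi P_c)

lemma P_add: "x \<in> carrier G \<Longrightarrow> P (a + b) x = P a (P b x)"
proof (induction a rule: int_induct[where k=0])
  case base then show ?case by (simp add: P0)
next
  case (step1 i)
  then show ?case using P_up[of x "i+b"] P_up[of "P b x" i] P_c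
    by (simp add: add.commute add.left_commute)
next
  case (step2 i)
  then show ?case using P_down[of x "i+b"] P_down[of "P b x" i] P_c
    by (simp add: algebra_simps)
qed

lemma P_m: "x \<in> carrier G \<Longrightarrow> y \<in> carrier G \<Longrightarrow> P k (x \<otimes> y) = P k x \<otimes> P k y"
proof (induction k rule: int_induct[where k=0])
  case base then show ?case by (simp add: P0)
next
  case (step1 i)
  then show ?case by (simp add: P_up phi_m P_c)
next
  case (step2 i)
  then show ?case by (simp add: P_down psi_m P_c)
qed

lemma P_hom: "P k \<in> hom G G"
  by (auto simp: hom_def P_c P_m)

lemma P_inv: "x \<in> carrier G \<Longrightarrow> P k (inv x) = inv (P k x)"
proof -
  interpret gh: group_hom G G "P k" by (unfold_locales) (rule P_hom)
  show "x \<in> carrier G \<Longrightarrow> P k (inv x) = inv (P k x)" by (rule gh.hom_inv)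
qed

lemma P_one: "P k \<one> = \<one>"
proof -
  interpret gh: group_hom G G "P k" by (unfold_locales) (rule P_hom)
  show ?thesis by (rule gh.hom_one)
qed

lemma P_cancel: "x \<in> carrier G \<Longrightarrow> P a (P (-a) x) = x"
  using P_add[of x a "-a"] by (simp add: P0)

lemma sdp_group: "group (sdp G \<phi>)"
proof (rule groupI)
  show "\<And>x y. x \<in> carrier (sdp G \<phi>) \<Longrightarrow> y \<in> carrier (sdp G \<phi>) \<Longrightarrow> x \<otimes>\<^bsub>sdp G \<phi>\<^esub> y \<in> carrier (sdp G \<phi>)"
    by (auto simp: sdp_def P_c)
  show "\<one>\<^bsub>sdp G \<phi>\<^esub> \<in> carrier (sdp G \<phi>)" by (simp add: sdp_def)
  show "\<And>x y z. x \<in> carrier (sdp G \<phi>) \<Longrightarrow> y \<in> carrier (sdp G \<phi>) \<Longrightarrow> z \<in> carrier (sdp G \<phi>) \<Longrightarrow>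
     x \<otimes>\<^bsub>sdp G \<phi>\<^esub> y \<otimes>\<^bsub>sdp G \<phi>\<^esub> z = x \<otimes>\<^bsub>sdp G \<phi>\<^esub> (y \<otimes>\<^bsub>sdp G \<phi>\<^esub> z)"
    by (auto simp: sdp_def P_c P_m P_add[symmetric] m_assoc add.commute add.assoc)
  show "\<And>x. x \<in> carrier (sdp G \<phi>) \<Longrightarrow> \<one>\<^bsub>sdp G \<phi>\<^esub> \<otimes>\<^bsub>sdp G \<phi>\<^esub> x = x"
    by (auto simp: sdp_def P_one)
  show "\<And>x. x \<in> carrier (sdp G \<phi>) \<Longrightarrow> \<exists>y\<in>carrier (sdp G \<phi>). y \<otimes>\<^bsub>sdp G \<phi>\<^esub> x = \<one>\<^bsub>sdp G \<phi>\<^esub>"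
  proof -
    fix x assume "x \<in> carrier (sdp G \<phi>)"
    then obtain a u where x: "x = (a, u)" "u \<in> carrier G" by (auto simp: sdp_def)
    show "\<exists>y\<in>carrier (sdp G \<phi>). y \<otimes>\<^bsub>sdp G \<phi>\<^esub> x = \<one>\<^bsub>sdp G \<phi>\<^esub>"
      by (rule bexI[where x="(-a, inv (P (-a) u))"])
         (auto simp: sdp_def x P_c P_inv P_cancel)
  qed
qed

lemma sdp_inv: "u \<in> carrier G \<Longrightarrow> inv\<^bsub>sdp G \<phi>\<^esub> (a, u) = (-a, inv (P (-a) u))"
proof -
  assume u: "u \<in> carrier G"
  interpret S: group "sdp G \<phi>" by (rule sdp_group)
  show ?thesis
    by (rule S.inv_equality) (auto simp: sdp_def u P_c P_inv P_cancel)
qed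

lemma conj_formula: "u \<in> carrier G \<Longrightarrow> g \<in> carrier G \<Longrightarrow>
  inv\<^bsub>sdp G \<phi>\<^esub> (a, u) \<otimes>\<^bsub>sdp G \<phi>\<^esub> (r, g) \<otimes>\<^bsub>sdp G \<phi>\<^esub> (a, u) = (r, inv (P r u) \<otimes> P a g \<otimes> u)"
proof -
  assume u: "u \<in> carrier G" and g: "g \<in> carrier G"
  have "P a (P r (inv (P (-a) u))) = inv (P r u)"
    using u by (simp add: P_inv P_c P_add[symmetric] algebra_simps)
  then show ?thesis using u g
    by (simp add: sdp_inv) (simp add: sdp_def P_m P_c)
qed

lemma key_id: "h \<in> carrier G \<Longrightarrow> y \<in> carrier G \<Longrightarrow>
   inv (P r (h \<otimes> y)) \<otimes> P r h \<otimes> (h \<otimes> y) = inv (P r y) \<otimes> h \<otimes> y"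
  by (simp add: P_m P_c inv_mult_group m_assoc[symmetric])
     (simp add: m_assoc P_c)

lemma conj_iff: "g \<in> carrier G \<Longrightarrow> K \<subseteq> carrier (sdp G \<phi>) \<Longrightarrow>
  conj_into (sdp G \<phi>) (r, g) K \<longleftrightarrow> (\<exists>a. \<exists>x\<in>carrier G. inv (P r x) \<otimes> P a g \<otimes> x \<in> slice G K r)"
proof -
  assume g: "g \<in> carrier G" and K: "K \<subseteq> carrier (sdp G \<phi>)"
  have cs: "carrier (sdp G \<phi>) = UNIV \<times> carrier G" by (simp add: sdp_def)
  have "conj_into (sdp G \<phi>) (r, g) K \<longleftrightarrow> (\<exists>a. \<exists>x\<in>carrier G. (r, inv (P r x) \<otimes> P a g \<otimes> x) \<in> K)"
    unfolding conj_into_def cs using g by (auto simp: conj_formula)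
  also have "\<dots> \<longleftrightarrow> (\<exists>a. \<exists>x\<in>carrier G. inv (P r x) \<otimes> P a g \<otimes> x \<in> slice G K r)"
    using g by (auto simp: slice_def P_c)
  finally show ?thesis .
qed

lemma shift_up: "g \<in> carrier G \<Longrightarrow> \<exists>x\<in>carrier G. inv (P r x) \<otimes> P a g \<otimes> x \<in> S \<Longrightarrow>
   \<exists>x\<in>carrier G. inv (P r x) \<otimes> P (a + r) g \<otimes> x \<in> S"
proof -
  assume g: "g \<in> carrier G" and "\<exists>x\<in>carrier G. inv (P r x) \<otimes> P a g \<otimes> x \<in> S"
  then obtain x where x: "x \<in> carrier G" "inv (P r x) \<otimes> P a g \<otimes> x \<in> S" by blast
  have "P (a + r) g = P r (P a g)" using g P_add[of g r a] by (simp add: add.commute)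
  then show ?thesis using x g key_id[of "P a g" x r] P_c
    by (intro bexI[where x="P a g \<otimes> x"]) auto
qed

lemma shift_down: "g \<in> carrier G \<Longrightarrow> \<exists>x\<in>carrier G. inv (P r x) \<otimes> P a g \<otimes> x \<in> S \<Longrightarrow>
   \<exists>x\<in>carrier G. inv (P r x) \<otimes> P (a - r) g \<otimes> x \<in> S"
proof -
  assume g: "g \<in> carrier G" and "\<exists>x\<in>carrier G. inv (P r x) \<otimes> P a g \<otimes> x \<in> S"
  then obtain x where x: "x \<in> carrier G" "inv (P r x) \<otimes> P a g \<otimes> x \<in> S" by blast
  define h where "h = P (a - r) g"
  have h: "h \<in> carrier G" using g P_c h_def by simp
  have "P a g = P r h" using g P_add[of g r "a - r"] h_def by simp
  moreover have "h \<otimes> (inv h \<otimes> x) = x" using h x by (simp add: m_assoc[symmetric])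
  ultimately show ?thesis using x g key_id[of h "inv h \<otimes> x" r] h
    by (intro bexI[where x="inv h \<otimes> x"]) (auto simp: h_def[symmetric])
qed

lemma shift_k: "g \<in> carrier G \<Longrightarrow> \<exists>x\<in>carrier G. inv (P r x) \<otimes> P a g \<otimes> x \<in> S \<Longrightarrow>
   \<exists>x\<in>carrier G. inv (P r x) \<otimes> P (a + k * r) g \<otimes> x \<in> S"
proof (induction k rule: int_induct[where k=0])
  case base then show ?case by simp
next
  case (step1 i)
  then show ?case using shift_up[of g r "a + i * r" S] by (simp add: algebra_simps)
next
  case (step2 i)
  then show ?case using shift_down[of g r "a + i * r" S] by (simp add: algebra_simps)
qed

end

theorem theorem3p1:
  fixes G (structure) and \<phi> :: "'a \<Rightarrow> 'a" and K :: "(int \<times> 'a) set" and r :: int and g :: 'a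
  assumes "group G"
    and "\<phi> \<in> iso G G"
    and "K \<subseteq> carrier (sdp G \<phi>)"
    and "g \<in> carrier G"
  shows "(r = 0 \<longrightarrow>
            (conj_into (sdp G \<phi>) (0, g) K \<longleftrightarrow>
             (\<exists>k::int. conj_into G (aut_pow G \<phi> k g) (slice G K 0))))
       \<and> (r \<noteq> 0 \<longrightarrow>
            (conj_into (sdp G \<phi>) (r, g) K \<longleftrightarrow>
             (\<exists>j \<in> {0..<\<bar>r\<bar>}. \<exists>z \<in> carrier G.
                inv (aut_pow G \<phi> r z) \<otimes> aut_pow G \<phi> j g \<otimes> z \<in> slice G K r)))"
proof -
  interpret A: autctx G \<phi> using assms(1,2) by (simp add: autctx_def autctx_axioms_def)
  have c: "\<And>r. conj_into (sdp G \<phi>) (r, g) K \<longleftrightarrow>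
     (\<exists>a. \<exists>x\<in>carrier G. inv (A.P r x) \<otimes> A.P a g \<otimes> x \<in> slice G K r)"
    using A.conj_iff assms(3,4) by blast
  have r0: "conj_into (sdp G \<phi>) (0, g) K \<longleftrightarrow>
             (\<exists>k::int. conj_into G (aut_pow G \<phi> k g) (slice G K 0))"
    unfolding c by (simp add: A.P0 conj_into_def)
  have rn: "conj_into (sdp G \<phi>) (r, g) K \<longleftrightarrow>
             (\<exists>j \<in> {0..<\<bar>r\<bar>}. \<exists>z \<in> carrier G.
                inv (aut_pow G \<phi> r z) \<otimes> aut_pow G \<phi> j g \<otimes> z \<in> slice G K r)" if rnz: "r \<noteq> 0"
  proof
    assume "conj_into (sdp G \<phi>) (r, g) K"
    then obtain a where a: "\<exists>x\<in>carrier G. inv (A.P r x) \<otimes> A.P a g \<otimes> x \<in> slice G K r"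
      unfolding c by blast
    obtain k where k: "a mod \<bar>r\<bar> = a + k * r"
    proof (cases "r > 0")
      case True
      then show ?thesis using that[of "- (a div \<bar>r\<bar>)"]
        by (metis abs_of_pos add.commute add_diff_cancel_left' minus_mult_minus minus_mult_left mod_div_mult_eq uminus_add_conv_diff)
    next
      case False
      then have "\<bar>r\<bar> = - r" using rnz by simp
      then show ?thesis using that[of "a div \<bar>r\<bar>"]
        by (metis add.commute add_diff_cancel_left' minus_mult_right mod_div_mult_eq uminus_add_conv_diff)
    qed
    have "a mod \<bar>r\<bar> \<in> {0..<\<bar>r\<bar>}" using rnz by simp
    then show "\<exists>j \<in> {0..<\<bar>r\<bar>}. \<exists>z \<in> carrier G.
                inv (aut_pow G \<phi> r z) \<otimes> aut_pow G \<phi> j g \<otimes> z \<in> slice G K r"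
      using A.shift_k[OF assms(4) a, of k] k by metis
  next
    assume "\<exists>j \<in> {0..<\<bar>r\<bar>}. \<exists>z \<in> carrier G.
                inv (aut_pow G \<phi> r z) \<otimes> aut_pow G \<phi> j g \<otimes> z \<in> slice G K r"
    then show "conj_into (sdp G \<phi>) (r, g) K" unfolding c by blast
  qed
  show ?thesis using r0 rn by blast
qed

end
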